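(* Let $n$ be a positive integer and $z$ a complex variable, and define $$g(z)=\sum_{t=0}^{n}\binom{t+n}{t}\left(-\frac12\right)^t(1+z)^t\sum_{s=0}^{n-t}\binom ns\binom n{s+t}z^s.$$ Then $g(z)=0$ if $n$ is odd, and $g(z)=\dfrac{(-1)^{n/2}}{2^n}\dbinom{n}{n/2}(z-1)^n$ if $n$ is even. *)

theory Defs
  imports Complex_Main
begin

end

theory Submission
  imports Defs "HOL-Computational_Algebra.Formal_Power_Series"
begin
unbundle fps_syntax

lemma pow_lin_nth:
  "((1 + fps_const (a::complex) * fps_X) ^ m) $ j = of_nat (m choose j) * a ^ j"
proof (induction m arbitrary: j)
  case 0
  then show ?case by (simp add: fps_one_nth)
next
  case (Suc m)
  have e: "(1 + fps_const a * fps_X) ^ Suc m = (1 + fps_const a * fps_X) ^ m + fps_const a * ((1 + fps_const a * fps_X) ^ m * fps_X)"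
    by (simp add: algebra_simps)
  show ?case
  proof (cases j)
    case 0 then show ?thesis using Suc by (simp add: e)
  next
    case (Suc i)
    then show ?thesis using Suc.IH by (simp add: e algebra_simps)
  qed
qed

definition G :: "complex \<Rightarrow> nat \<Rightarrow> complex fps" where
  "G w m = Abs_fps (\<lambda>j. of_nat ((m + j) choose j) * w ^ j)"

lemma G_step: "G w m * (1 - fps_const w * fps_X) = (if m = 0 then 1 else G w (m - 1))"
proof (rule fps_ext)
  fix j
  show "(G w m * (1 - fps_const w * fps_X)) $ j = (if m = 0 then 1 else G w (m - 1)) $ j"
  proof (cases j)
    case 0 then show ?thesis by (simp add: G_def algebra_simps)
  next
    case (Suc i)
    have "(G w m * (1 - fps_const w * fps_X)) $ j = G w m $ j - w * G w m $ i"
      by (simp add: algebra_simps Suc)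
    also have "\<dots> = (if m = 0 then 1 else G w (m - 1)) $ j"
    proof (cases m)
      case 0 then show ?thesis by (simp add: G_def Suc)
    next
      case (Suc k)
      have "(Suc k + Suc i) choose Suc i = ((k + Suc i) choose Suc i) + ((Suc k + i) choose i)"
        by simp
      then show ?thesis by (simp add: G_def Suc \<open>j = Suc i\<close> algebra_simps)
    qed
    finally show ?thesis .
  qed
qed

lemma G_inv: "G w m * (1 - fps_const w * fps_X) ^ Suc m = 1"
proof (induction m)
  case 0 then show ?case using G_step[of w 0] by simp
next
  case (Suc m)
  have "G w (Suc m) * (1 - fps_const w * fps_X) ^ Suc (Suc m) = (G w (Suc m) * (1 - fps_const w * fps_X)) * (1 - fps_const w * fps_X) ^ Suc m"
    by (simp only: power_Suc mult.assoc)
  also have "\<dots> = 1" using G_step[of w "Suc m"] Suc by simp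
  finally show ?case .
qed

lemma bracket:
  fixes z :: complex
  shows "(1 + fps_const z * fps_X) * (1 + fps_const 1 * fps_X) =
    fps_const (- (((z-1)/2)^2)) * fps_X^2 + (1 + fps_const ((1+z)/2) * fps_X)^2"
proof -
  define H :: "complex fps" where "H = fps_const (1/2)"
  have h2: "2 * H = 1" unfolding H_def by (simp add: numeral_fps_const)
  have e1: "fps_const (- (((z-1)/2)^2)) = - (((fps_const z - 1) * H)^2)"
  proof -
    have "fps_const z - 1 = fps_const (z-1)" by (metis fps_const_1_eq_1 fps_const_sub)
    then show ?thesis unfolding H_def by (simp add: power2_eq_square)
  qed
  have e2: "fps_const ((1+z)/2) = (1 + fps_const z) * H"
  proof -
    have "1 + fps_const z = fps_const (1+z)" by (metis fps_const_1_eq_1 fps_const_add)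
    then show ?thesis unfolding H_def by simp
  qed
  show ?thesis unfolding e1 e2 fps_const_1_eq_1 using h2 by algebra
qed


lemma coeff_side:
  fixes n :: nat and z :: complex
  defines "w \<equiv> - (1 + z) / 2"
  shows "((1 + fps_const z * fps_X)^n * (1 + fps_const 1 * fps_X)^n * G w n) $ n =
    (\<Sum>t=0..n. of_nat ((t + n) choose t) * (- 1 / 2) ^ t * (1 + z) ^ t *
            (\<Sum>s=0..n - t. of_nat (n choose s) * of_nat (n choose (s + t)) * z ^ s))"
proof -
  have P: "((1 + fps_const z * fps_X)^n * (1 + fps_const 1 * fps_X)^n) $ i =
      (\<Sum>s=0..i. of_nat (n choose s) * z ^ s * of_nat (n choose (i - s)))" for i
    using pow_lin_nth[of 1, simplified] by (simp add: fps_mult_nth pow_lin_nth)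
  have "(\<Sum>t=0..n. of_nat ((t + n) choose t) * (- 1 / 2) ^ t * (1 + z) ^ t *
            (\<Sum>s=0..n - t. of_nat (n choose s) * of_nat (n choose (s + t)) * z ^ s))
      = (\<Sum>i=0..n. of_nat ((n - i + n) choose (n - i)) * (- 1 / 2) ^ (n - i) * (1 + z) ^ (n - i) *
            (\<Sum>s=0..n - (n - i). of_nat (n choose s) * of_nat (n choose (s + (n - i))) * z ^ s))"
    by (subst sum.atLeastAtMost_rev) simp
  also have "\<dots> = (\<Sum>i=0..n. ((1 + fps_const z * fps_X)^n * (1 + fps_const 1 * fps_X)^n) $ i * G w n $ (n - i))"
  proof (rule sum.cong[OF refl])
    fix i assume i: "i \<in> {0..n}"
    have "(\<Sum>s=0..n - (n - i). of_nat (n choose s) * of_nat (n choose (s + (n - i))) * z ^ s)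
        = (\<Sum>s=0..i. of_nat (n choose s) * z ^ s * of_nat (n choose (i - s)) :: complex)"
    proof (rule sum.cong)
      show "{0..n - (n - i)} = {0..i}" using i by auto
    next
      fix s assume s: "s \<in> {0..i}"
      have "n choose (s + (n - i)) = n choose (n - (s + (n - i)))"
        using s i by (intro binomial_symmetric) auto
      also have "n - (s + (n - i)) = i - s" using s i by auto
      finally show "of_nat (n choose s) * of_nat (n choose (s + (n - i))) * z ^ s
          = (of_nat (n choose s) * z ^ s * of_nat (n choose (i - s)) :: complex)" by simp
    qed
    moreover have "(- 1 / 2) ^ (n - i) * (1 + z) ^ (n - i) = w ^ (n - i)"
    proof -
      have "(- 1 / 2) * (1 + z) = w" unfolding w_def by (simp add: field_simps)
      then show ?thesis by (metis power_mult_distrib)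
    qed
    ultimately show "of_nat ((n - i + n) choose (n - i)) * (- 1 / 2) ^ (n - i) * (1 + z) ^ (n - i) *
            (\<Sum>s=0..n - (n - i). of_nat (n choose s) * of_nat (n choose (s + (n - i))) * z ^ s)
        = ((1 + fps_const z * fps_X)^n * (1 + fps_const 1 * fps_X)^n) $ i * G w n $ (n - i)"
      unfolding P G_def by (simp add: add.commute mult.commute mult.left_commute)
  qed
  also have "\<dots> = ((1 + fps_const z * fps_X)^n * (1 + fps_const 1 * fps_X)^n * G w n) $ n"
    by (simp add: fps_mult_nth[of _ "G w n"])
  finally show ?thesis by simp
qed


lemma term_nth:
  fixes a D :: complex and n k :: nat
  assumes "k \<le> n"
  defines "u \<equiv> 1 + fps_const a * fps_X"
  shows "(of_nat (n choose k) * (fps_const D * fps_X^2)^k * (u^2)^(n-k) * G (-a) n) $ n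
     = (if 2*k = n then of_nat (n choose k) * D^k else 0)"
proof -
  have inv: "G (-a) n * u ^ Suc n = 1"
  proof -
    have "1 - fps_const (-a) * fps_X = u" unfolding u_def by (simp flip: fps_const_neg)
    then show ?thesis using G_inv[of "-a" n] by simp
  qed
  have "of_nat (n choose k) * (fps_const D * fps_X^2)^k * (u^2)^(n-k) * G (-a) n
      = fps_const (of_nat (n choose k) * D^k) * (fps_X^(2*k) * (u^(2*(n-k)) * G (-a) n))"
    by (simp add: power_mult_distrib power_mult[symmetric] fps_of_nat[symmetric] mult.assoc mult.left_commute
         fps_const_mult[symmetric] del: fps_const_mult)
  then have "(of_nat (n choose k) * (fps_const D * fps_X^2)^k * (u^2)^(n-k) * G (-a) n) $ n
      = of_nat (n choose k) * D^k * (if n < 2*k then 0 else (u^(2*(n-k)) * G (-a) n) $ (n - 2*k))"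
    by (simp only: fps_mult_left_const_nth fps_X_power_mult_nth)
  also have "\<dots> = (if 2*k = n then of_nat (n choose k) * D^k else 0)"
  proof (cases "n < 2*k")
    case True then show ?thesis by simp
  next
    case False
    show ?thesis
    proof (cases "2*k = n")
      case True
      have "u $ 0 = 1" unfolding u_def by simp
      then have "(u^(2*(n-k)) * G (-a) n) $ 0 = 1" by (simp add: fps_nth_power_0 G_def)
      with True show ?thesis by simp
    next
      case ne: False
      with False have lt: "2*k < n" by simp
      have "u^(2*(n-k)) * G (-a) n = u^(n - 2*k - 1) * (G (-a) n * u ^ Suc n)"
      proof -
        have "2*(n-k) = (n - 2*k - 1) + Suc n" using lt by simp
        then show ?thesis by (simp only: power_add mult_ac)
      qed
      also have "\<dots> = u^(n - 2*k - 1)" using inv by simp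
      finally have eqq: "u^(2*(n-k)) * G (-a) n = u^(n - 2*k - 1)" .
      have "n - Suc (2*k) < n - 2*k" using lt by arith
      then have "(u^(2*(n-k)) * G (-a) n) $ (n - 2*k) = 0"
        unfolding eqq unfolding u_def by (simp add: pow_lin_nth)
      with ne False show ?thesis by simp
    qed
  qed
  finally show ?thesis .
qed


theorem lemma8:
  fixes n :: nat and z :: complex
  assumes "n > 0"
  shows "(\<Sum>t=0..n. of_nat ((t + n) choose t) * (- 1 / 2) ^ t * (1 + z) ^ t *
            (\<Sum>s=0..n - t. of_nat (n choose s) * of_nat (n choose (s + t)) * z ^ s))
         = (if odd n then 0
            else (- 1) ^ (n div 2) / 2 ^ n * of_nat (n choose (n div 2)) * (z - 1) ^ n)"
proof -
  define a where "a = (1 + z) / 2"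
  define D where "D = - (((z-1)/2)^2)"
  define u where "u = 1 + fps_const a * fps_X"
  have wa: "- (1 + z) / 2 = - a" unfolding a_def by (simp add: divide_simps)
  have eq: "(1 + fps_const z * fps_X)^n * (1 + fps_const 1 * fps_X)^n = (fps_const D * fps_X^2 + u^2)^n"
    unfolding D_def u_def a_def by (simp only: power_mult_distrib[symmetric] bracket)
  have "(\<Sum>t=0..n. of_nat ((t + n) choose t) * (- 1 / 2) ^ t * (1 + z) ^ t *
            (\<Sum>s=0..n - t. of_nat (n choose s) * of_nat (n choose (s + t)) * z ^ s))
       = ((fps_const D * fps_X^2 + u^2)^n * G (-a) n) $ n"
    using coeff_side[of z n] unfolding eq wa by simp
  also have "\<dots> = (\<Sum>k\<le>n. (of_nat (n choose k) * (fps_const D * fps_X^2)^k * (u^2)^(n-k) * G (-a) n) $ n)"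
    by (simp only: binomial_ring[of "fps_const D * fps_X^2" "u^2" n] sum_distrib_right fps_sum_nth)
  also have "\<dots> = (\<Sum>k\<le>n. (if 2*k = n then of_nat (n choose k) * D^k else 0))"
  proof (rule sum.cong[OF refl])
    fix k assume "k \<in> {..n}"
    then show "(of_nat (n choose k) * (fps_const D * fps_X^2)^k * (u^2)^(n-k) * G (-a) n) $ n
        = (if 2*k = n then of_nat (n choose k) * D^k else 0)"
      unfolding u_def by (intro term_nth) simp
  qed
  also have "\<dots> = (if odd n then 0
            else (- 1) ^ (n div 2) / 2 ^ n * of_nat (n choose (n div 2)) * (z - 1) ^ n)"
  proof (cases "odd n")
    case True
    then have "\<And>k. 2*k \<noteq> n" by auto
    then show ?thesis using True by simp
  next
    case False
    then obtain m where m: "n = 2*m" by auto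
    have "(\<Sum>k\<le>n. (if 2*k = n then of_nat (n choose k) * D^k else 0)) =
          (\<Sum>k\<le>n. (if k = m then of_nat (n choose k) * D^k else 0))"
      using m by (intro sum.cong) auto
    also have "\<dots> = of_nat (n choose m) * D^m" using m by simp
    also have "\<dots> = (- 1) ^ (n div 2) / 2 ^ n * of_nat (n choose (n div 2)) * (z - 1) ^ n"
    proof -
      have "D^m = (-1)^m * ((z-1)/2)^(2*m)" unfolding D_def
        by (simp add: power_mult power_minus[of "((z-1)/2)^2" m])
      also have "\<dots> = (-1)^m / 2^(2*m) * (z-1)^(2*m)" by (simp add: power_divide)
      finally show ?thesis using m by simp
    qed
    finally show ?thesis using False by simp
  qed
  finally show ?thesis .
qed

end
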